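(* Suppose that there exists a countably infinite partition of $\Omega$ into measurable sets of strictly positive probability. Let $E$ be a free $L^0$-module. Then $E$ is stable if and only if $E$ has finite rank.
   Context: $(\Omega,\mathcal F,\mathbb P)$ is a probability space and $L^0=L^0(\Omega,\mathcal F,\mathbb P)$ is the commutative ring of real-valued measurable functions modulo $\mathbb P$-a.e. equality; measurable sets are identified when they differ by a null set. An $L^0$-module $E$ is called stable if for every countable measurable partition $(A_k)$ of $\Omega$ and every sequence $(x_k)$ in $E$ there exists a unique $x\in E$ with $1_{A_k}x=1_{A_k}x_k$ for all $k$. A free $L^0$-module has a well-defined rank (cardinality of a basis), since $L^0$ is commutative. *)

theory Defs
  imports "HOL-Probability.Probability" "HOL-Algebra.Module"
begin

definition L0_class :: "'a measure \<Rightarrow> ('a \<Rightarrow> real) \<Rightarrow> ('a \<Rightarrow> real) set" where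
  "L0_class M f = {g \<in> borel_measurable M. AE x in M. g x = f x}"

definition L0_rep :: "('a \<Rightarrow> real) set \<Rightarrow> 'a \<Rightarrow> real" where
  "L0_rep X = (SOME f. f \<in> X)"

definition L0 :: "'a measure \<Rightarrow> ('a \<Rightarrow> real) set ring" where
  "L0 M = \<lparr> carrier = L0_class M ` borel_measurable M,
            monoid.mult = (\<lambda>X Y. L0_class M (\<lambda>x. L0_rep X x * L0_rep Y x)),
            one = L0_class M (\<lambda>_. 1),
            zero = L0_class M (\<lambda>_. 0),
            add = (\<lambda>X Y. L0_class M (\<lambda>x. L0_rep X x + L0_rep Y x)) \<rparr>"

definition L0_ind :: "'a measure \<Rightarrow> 'a set \<Rightarrow> ('a \<Rightarrow> real) set" where
  "L0_ind M A = L0_class M (indicator A)"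

definition lin_indep :: "('r, 'c) ring_scheme \<Rightarrow> ('r, 'e, 'd) module_scheme \<Rightarrow> 'e set \<Rightarrow> bool" where
  "lin_indep R E B \<longleftrightarrow>
     (\<forall>S a. finite S \<and> S \<subseteq> B \<and> a \<in> S \<rightarrow> carrier R \<and>
        finsum E (\<lambda>b. a b \<odot>\<^bsub>E\<^esub> b) S = \<zero>\<^bsub>E\<^esub> \<longrightarrow> (\<forall>b\<in>S. a b = \<zero>\<^bsub>R\<^esub>))"

definition spans :: "('r, 'c) ring_scheme \<Rightarrow> ('r, 'e, 'd) module_scheme \<Rightarrow> 'e set \<Rightarrow> bool" where
  "spans R E B \<longleftrightarrow>
     (\<forall>x\<in>carrier E. \<exists>S a. finite S \<and> S \<subseteq> B \<and> a \<in> S \<rightarrow> carrier R \<and>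
        x = finsum E (\<lambda>b. a b \<odot>\<^bsub>E\<^esub> b) S)"

definition is_basis :: "('r, 'c) ring_scheme \<Rightarrow> ('r, 'e, 'd) module_scheme \<Rightarrow> 'e set \<Rightarrow> bool" where
  "is_basis R E B \<longleftrightarrow> B \<subseteq> carrier E \<and> lin_indep R E B \<and> spans R E B"

definition free_module :: "('r, 'c) ring_scheme \<Rightarrow> ('r, 'e, 'd) module_scheme \<Rightarrow> bool" where
  "free_module R E \<longleftrightarrow> (\<exists>B. is_basis R E B)"

text \<open>Finite rank: the (well-defined) rank, i.e. the cardinality of a basis, is finite.\<close>
definition finite_rank :: "('r, 'c) ring_scheme \<Rightarrow> ('r, 'e, 'd) module_scheme \<Rightarrow> bool" where
  "finite_rank R E \<longleftrightarrow> (\<exists>B. is_basis R E B \<and> finite B)"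

definition meas_partition :: "'a measure \<Rightarrow> (nat \<Rightarrow> 'a set) \<Rightarrow> bool" where
  "meas_partition M A \<longleftrightarrow> (\<forall>k. A k \<in> sets M) \<and> disjoint_family A \<and> (\<Union>k. A k) = space M"

definition L0_stable :: "'a measure \<Rightarrow> (('a \<Rightarrow> real) set, 'e, 'd) module_scheme \<Rightarrow> bool" where
  "L0_stable M E \<longleftrightarrow>
     (\<forall>A x. meas_partition M A \<and> (\<forall>k. x k \<in> carrier E) \<longrightarrow>
        (\<exists>!y. y \<in> carrier E \<and>
           (\<forall>k. L0_ind M (A k) \<odot>\<^bsub>E\<^esub> y = L0_ind M (A k) \<odot>\<^bsub>E\<^esub> x k)))"

end

theory Submission imports Defs begin

lemma L0_class_cong: "AE x in M. f x = g x \<Longrightarrow> L0_class M f = L0_class M g"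
  unfolding L0_class_def by (auto elim: AE_mp)

lemma L0_class_self: "f \<in> borel_measurable M \<Longrightarrow> f \<in> L0_class M f"
  unfolding L0_class_def by auto

lemma L0_rep_in: "f \<in> borel_measurable M \<Longrightarrow> L0_rep (L0_class M f) \<in> L0_class M f"
  unfolding L0_rep_def using L0_class_self by (metis someI_ex)

lemma L0_carrier_rep:
  assumes "X \<in> carrier (L0 M)"
  shows "L0_rep X \<in> borel_measurable M" "X = L0_class M (L0_rep X)"
proof -
  from assms obtain f where f: "f \<in> borel_measurable M" "X = L0_class M f"
    by (auto simp: L0_def)
  have r: "L0_rep X \<in> L0_class M f" using L0_rep_in[OF f(1)] f(2) by simp
  then show "L0_rep X \<in> borel_measurable M" by (simp add: L0_class_def)
  from r have "AE x in M. f x = L0_rep X x" by (auto simp: L0_class_def elim: AE_mp)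
  then show "X = L0_class M (L0_rep X)" using f(2) L0_class_cong by metis
qed

lemma L0_class_carrier: "f \<in> borel_measurable M \<Longrightarrow> L0_class M f \<in> carrier (L0 M)"
  by (simp add: L0_def)

lemma L0_class_eq_AE:
  assumes "f \<in> borel_measurable M" "L0_class M f = L0_class M g"
  shows "AE x in M. f x = g x"
proof -
  have "f \<in> L0_class M g" using L0_class_self[OF assms(1)] assms(2) by simp
  then show ?thesis by (simp add: L0_class_def)
qed

lemma L0_ind_carrier: "A \<in> sets M \<Longrightarrow> L0_ind M A \<in> carrier (L0 M)"
  unfolding L0_ind_def by (rule L0_class_carrier) simp

lemma L0_ind_mult:
  assumes "A \<in> sets M" "Y \<in> carrier (L0 M)"
  shows "L0_ind M A \<otimes>\<^bsub>L0 M\<^esub> Y = L0_class M (\<lambda>x. indicator A x * L0_rep Y x)"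
proof -
  have "L0_rep (L0_ind M A) \<in> L0_class M (indicator A)"
    unfolding L0_ind_def by (rule L0_rep_in) (use assms in simp)
  then have "AE x in M. L0_rep (L0_ind M A) x = indicator A x" by (simp add: L0_class_def)
  then have "AE x in M. L0_rep (L0_ind M A) x * L0_rep Y x = indicator A x * L0_rep Y x"
    by (auto elim: AE_mp)
  then show ?thesis by (simp add: L0_def L0_class_cong)
qed

lemma L0_zero: "\<zero>\<^bsub>L0 M\<^esub> = L0_class M (\<lambda>_. 0)" by (simp add: L0_def)

lemma L0_ind_nonzero:
  assumes "A \<in> sets M" "emeasure M A \<noteq> 0"
  shows "L0_ind M A \<noteq> \<zero>\<^bsub>L0 M\<^esub>"
proof
  assume "L0_ind M A = \<zero>\<^bsub>L0 M\<^esub>"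
  then have "AE x in M. indicator A x = (0::real)"
    unfolding L0_zero L0_ind_def by (intro L0_class_eq_AE) (use assms in auto)
  then have "AE x in M. x \<notin> A" by (auto elim: AE_mp simp: indicator_def split: if_splits)
  then have "emeasure M A = 0"
    using AE_iff_measurable[of A M "\<lambda>x. x \<notin> A"] assms(1) sets.sets_into_space[OF assms(1)] by auto
  with assms(2) show False by simp
qed

lemma L0_glue:
  assumes A: "meas_partition M A" and c: "\<And>k. c k \<in> carrier (L0 M)"
  shows "\<exists>g\<in>carrier (L0 M). \<forall>k. L0_ind M (A k) \<otimes>\<^bsub>L0 M\<^esub> g = L0_ind M (A k) \<otimes>\<^bsub>L0 M\<^esub> c k"
proof -
  define r where "r k = L0_rep (c k)" for k
  have rm: "r k \<in> borel_measurable M" for k using L0_carrier_rep[OF c] r_def by simp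
  have Am: "A k \<in> sets M" for k using A by (simp add: meas_partition_def)
  define g where "g x = (\<Sum>k. indicator (A k) x * r k x)" for x
  have gm: "g \<in> borel_measurable M" unfolding g_def using rm Am by measurable
  have pt: "indicator (A k) x * g x = indicator (A k) x * r k x" for k x
  proof (cases "x \<in> A k")
    case True
    have "(\<lambda>j. indicator (A j) x * r j x) = (\<lambda>j. if j = k then indicator (A k) x * r k x else 0)"
    proof
      fix j show "indicator (A j) x * r j x = (if j = k then indicator (A k) x * r k x else 0)"
        using A True by (auto simp: meas_partition_def disjoint_family_on_def indicator_def)
    qed
    then have "g x = indicator (A k) x * r k x"
      unfolding g_def using sums_single[of k "\<lambda>j. indicator (A k) x * r k x"] sums_unique by metis
    then show ?thesis using True by simp
  qed simp
  define G where "G = L0_class M g"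
  have Gc: "G \<in> carrier (L0 M)" using gm G_def L0_class_carrier by blast
  have "AE x in M. L0_rep G x = g x"
    using L0_rep_in[OF gm] G_def by (simp add: L0_class_def)
  then have "\<forall>k. L0_ind M (A k) \<otimes>\<^bsub>L0 M\<^esub> G = L0_ind M (A k) \<otimes>\<^bsub>L0 M\<^esub> c k"
    unfolding L0_ind_mult[OF Am Gc] L0_ind_mult[OF Am c]
    by (auto intro!: L0_class_cong elim!: AE_mp simp: pt r_def[symmetric])
  with Gc show ?thesis by blast
qed

lemma L0_zero_local:
  assumes A: "meas_partition M A" and d: "d \<in> carrier (L0 M)"
    and z: "\<And>k. L0_ind M (A k) \<otimes>\<^bsub>L0 M\<^esub> d = \<zero>\<^bsub>L0 M\<^esub>"
  shows "d = \<zero>\<^bsub>L0 M\<^esub>"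
proof -
  have Am: "A k \<in> sets M" for k using A by (simp add: meas_partition_def)
  have rm: "L0_rep d \<in> borel_measurable M" using L0_carrier_rep[OF d] by simp
  have "AE x in M. indicator (A k) x * L0_rep d x = 0" for k
    using z[of k] unfolding L0_ind_mult[OF Am d] L0_zero
    by (intro L0_class_eq_AE) (use Am rm in auto)
  then have "\<forall>k. AE x in M. indicator (A k) x * L0_rep d x = 0" by blast
  then have "AE x in M. \<forall>k. indicator (A k) x * L0_rep d x = 0" unfolding AE_all_countable .
  then have "AE x in M. L0_rep d x = 0"
  proof (rule AE_mp, intro AE_I2 impI)
    fix x assume x: "x \<in> space M" and h: "\<forall>k. indicator (A k) x * L0_rep d x = 0"
    from x A obtain k where "x \<in> A k" by (auto simp: meas_partition_def)
    with h[rule_format, of k] show "L0_rep d x = 0" by simp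
  qed
  then have "L0_class M (L0_rep d) = L0_class M (\<lambda>_. 0)" by (rule L0_class_cong)
  then show ?thesis using L0_carrier_rep(2)[OF d] by (simp add: L0_zero)
qed

context module
begin

lemma coords:
  assumes fin: "finite B" and BM: "B \<subseteq> carrier M" and sp: "spans R M B" and x: "x \<in> carrier M"
  shows "\<exists>a. a \<in> B \<rightarrow> carrier R \<and> x = (\<Oplus>\<^bsub>M\<^esub> b\<in>B. a b \<odot>\<^bsub>M\<^esub> b)"
proof -
  from sp x obtain S a where S: "finite S" "S \<subseteq> B" "a \<in> S \<rightarrow> carrier R"
    and xe: "x = (\<Oplus>\<^bsub>M\<^esub> b\<in>S. a b \<odot>\<^bsub>M\<^esub> b)"
    using sp[unfolded spans_def] x by meson
  define a' where "a' b = (if b \<in> S then a b else \<zero>)" for b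
  have a': "a' \<in> B \<rightarrow> carrier R" using S(3) unfolding a'_def Pi_def by simp
  have "(\<Oplus>\<^bsub>M\<^esub> b\<in>S. a b \<odot>\<^bsub>M\<^esub> b) = (\<Oplus>\<^bsub>M\<^esub> b\<in>B. a' b \<odot>\<^bsub>M\<^esub> b)"
  proof (rule M.add.finprod_mono_neutral_cong_left[OF fin S(2)])
    fix i assume i: "i \<in> B - S"
    then have "i \<in> carrier M" using BM by blast
    then show "a' i \<odot>\<^bsub>M\<^esub> i = \<zero>\<^bsub>M\<^esub>" using i unfolding a'_def by simp
  next
    fix i assume "i \<in> S" then show "a i \<odot>\<^bsub>M\<^esub> i = a' i \<odot>\<^bsub>M\<^esub> i" unfolding a'_def by simp
  next
    show "(\<lambda>b. a' b \<odot>\<^bsub>M\<^esub> b) \<in> B \<rightarrow> carrier M"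
    proof
      fix i assume i: "i \<in> B"
      then have "i \<in> carrier M" "a' i \<in> carrier R" using BM a' by auto
      then show "a' i \<odot>\<^bsub>M\<^esub> i \<in> carrier M" by (rule smult_closed[rotated])
    qed
  qed
  with xe a' show ?thesis by blast
qed

lemma smult_finsum_coef:
  assumes "finite B" "B \<subseteq> carrier M" "a \<in> B \<rightarrow> carrier R" "u \<in> carrier R"
  shows "u \<odot>\<^bsub>M\<^esub> (\<Oplus>\<^bsub>M\<^esub> b\<in>B. a b \<odot>\<^bsub>M\<^esub> b) = (\<Oplus>\<^bsub>M\<^esub> b\<in>B. (u \<otimes> a b) \<odot>\<^bsub>M\<^esub> b)"
proof -
  have "u \<odot>\<^bsub>M\<^esub> (\<Oplus>\<^bsub>M\<^esub> b\<in>B. a b \<odot>\<^bsub>M\<^esub> b) = (\<Oplus>\<^bsub>M\<^esub> b\<in>B. u \<odot>\<^bsub>M\<^esub> (a b \<odot>\<^bsub>M\<^esub> b))"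
    by (rule finsum_smult_ldistr) (use assms in auto)
  also have "\<dots> = (\<Oplus>\<^bsub>M\<^esub> b\<in>B. (u \<otimes> a b) \<odot>\<^bsub>M\<^esub> b)"
    by (rule M.finsum_cong') (use assms in \<open>auto simp: smult_assoc1 Pi_iff subset_iff\<close>)
  finally show ?thesis .
qed

lemma lin_indep_B:
  assumes "finite B" "B \<subseteq> carrier M" "lin_indep R M B" "a \<in> B \<rightarrow> carrier R"
    "(\<Oplus>\<^bsub>M\<^esub> b\<in>B. a b \<odot>\<^bsub>M\<^esub> b) = \<zero>\<^bsub>M\<^esub>" "b \<in> B"
  shows "a b = \<zero>"
proof -
  have "\<forall>b\<in>B. a b = \<zero>"
    using assms(3)[unfolded lin_indep_def, rule_format, of B a] assms(1,4,5) by simp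
  with assms(6) show ?thesis by blast
qed

end

theorem proposition3p2:
  fixes M :: "'a measure" and E :: "(('a \<Rightarrow> real) set, 'e, 'd) module_scheme"
  assumes "prob_space M"
    and "\<exists>A. meas_partition M A \<and> (\<forall>k. measure M (A k) > 0)"
    and "module (L0 M) E"
    and "free_module (L0 M) E"
  shows "L0_stable M E \<longleftrightarrow> finite_rank (L0 M) E"
proof
  interpret E: module "L0 M" E by fact
  assume st: "L0_stable M E"
  from assms(4) obtain B where B: "is_basis (L0 M) E B" unfolding free_module_def by blast
  have BE: "B \<subseteq> carrier E" and li: "lin_indep (L0 M) E B" and sp: "spans (L0 M) E B"
    using B by (auto simp: is_basis_def)
  have "finite B"
  proof (rule ccontr)
    assume "infinite B"
    then obtain b :: "nat \<Rightarrow> _" where b: "inj b" "range b \<subseteq> B"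
      using infinite_countable_subset by blast
    from assms(2) obtain A where A: "meas_partition M A" and pos: "\<And>k. measure M (A k) > 0" by blast
    have Am: "A k \<in> sets M" for k using A by (simp add: meas_partition_def)
    have bc: "b k \<in> carrier E" for k using b BE by auto
    have "\<exists>!y. y \<in> carrier E \<and> (\<forall>k. L0_ind M (A k) \<odot>\<^bsub>E\<^esub> y = L0_ind M (A k) \<odot>\<^bsub>E\<^esub> b k)"
      by (rule st[unfolded L0_stable_def, rule_format]) (use A bc in simp)
    then obtain y where y: "y \<in> carrier E"
      "\<And>k. L0_ind M (A k) \<odot>\<^bsub>E\<^esub> y = L0_ind M (A k) \<odot>\<^bsub>E\<^esub> b k"
      by (meson ex1_implies_ex)
    obtain S a where S: "finite S" "S \<subseteq> B" "a \<in> S \<rightarrow> carrier (L0 M)"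
      and ye: "y = (\<Oplus>\<^bsub>E\<^esub> c\<in>S. a c \<odot>\<^bsub>E\<^esub> c)"
      using sp[unfolded spans_def] y(1) by meson
    have "\<exists>k. b k \<notin> S"
    proof (rule ccontr)
      assume "\<not> (\<exists>k. b k \<notin> S)"
      then have "range b \<subseteq> S" by auto
      then have "finite (range b)" using S(1) finite_subset by blast
      with b(1) show False by (simp add: finite_image_iff)
    qed
    then obtain k where k: "b k \<notin> S" by blast
    define u where "u = L0_ind M (A k)"
    have u: "u \<in> carrier (L0 M)" using u_def L0_ind_carrier Am by blast
    have SE: "S \<subseteq> carrier E" using S BE by auto
    have eq: "u \<odot>\<^bsub>E\<^esub> b k = (\<Oplus>\<^bsub>E\<^esub> c\<in>S. (u \<otimes>\<^bsub>L0 M\<^esub> a c) \<odot>\<^bsub>E\<^esub> c)"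
      using y(2)[of k] ye E.smult_finsum_coef[OF S(1) SE S(3) u] u_def by simp
    define a' where "a' c = (if c = b k then \<ominus>\<^bsub>L0 M\<^esub> u else u \<otimes>\<^bsub>L0 M\<^esub> a c)" for c
    have a': "a' \<in> insert (b k) S \<rightarrow> carrier (L0 M)" using S(3) u by (auto simp: a'_def Pi_iff)
    have "(\<Oplus>\<^bsub>E\<^esub> c\<in>insert (b k) S. a' c \<odot>\<^bsub>E\<^esub> c)
        = a' (b k) \<odot>\<^bsub>E\<^esub> b k \<oplus>\<^bsub>E\<^esub> (\<Oplus>\<^bsub>E\<^esub> c\<in>S. a' c \<odot>\<^bsub>E\<^esub> c)"
      by (rule E.finsum_insert) (use S k a' SE bc in auto)
    also have "(\<Oplus>\<^bsub>E\<^esub> c\<in>S. a' c \<odot>\<^bsub>E\<^esub> c) = (\<Oplus>\<^bsub>E\<^esub> c\<in>S. (u \<otimes>\<^bsub>L0 M\<^esub> a c) \<odot>\<^bsub>E\<^esub> c)"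
      by (rule E.finsum_cong') (use S k a' SE u in \<open>auto simp: a'_def Pi_iff subset_iff\<close>)
    also have "a' (b k) \<odot>\<^bsub>E\<^esub> b k = \<ominus>\<^bsub>E\<^esub> (u \<odot>\<^bsub>E\<^esub> b k)"
      using E.smult_l_minus[OF u bc] by (simp add: a'_def)
    finally have sum0: "(\<Oplus>\<^bsub>E\<^esub> c\<in>insert (b k) S. a' c \<odot>\<^bsub>E\<^esub> c) = \<zero>\<^bsub>E\<^esub>"
      using eq[symmetric] E.l_neg E.smult_closed[OF u bc] by simp
    have "a' (b k) = \<zero>\<^bsub>L0 M\<^esub>"
      by (rule li[unfolded lin_indep_def, rule_format, of "insert (b k) S" a' "b k"])
         (use S a' b sum0 in auto)
    then have "\<ominus>\<^bsub>L0 M\<^esub> u = \<zero>\<^bsub>L0 M\<^esub>" by (simp add: a'_def)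
    then have "u = \<zero>\<^bsub>L0 M\<^esub>" using u E.R.add.inv_inv[OF u] by simp
    moreover have "emeasure M (A k) \<noteq> 0"
      using pos[of k] by (auto simp: measure_def)
    ultimately show False using L0_ind_nonzero[OF Am] u_def by blast
  qed
  with B show "finite_rank (L0 M) E" unfolding finite_rank_def by blast
next
  interpret E: module "L0 M" E by fact
  assume "finite_rank (L0 M) E"
  then obtain B where B: "is_basis (L0 M) E B" and fin: "finite B" unfolding finite_rank_def by blast
  have BE: "B \<subseteq> carrier E" and li: "lin_indep (L0 M) E B" and sp: "spans (L0 M) E B"
    using B by (auto simp: is_basis_def)
  show "L0_stable M E"
    unfolding L0_stable_def
  proof (intro allI impI, elim conjE)
    fix A :: "nat \<Rightarrow> 'a set" and x :: "nat \<Rightarrow> 'e" assume A: "meas_partition M A" and x: "\<forall>k. x k \<in> carrier E"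
    have Am: "A k \<in> sets M" for k using A by (simp add: meas_partition_def)
    have uc: "L0_ind M (A k) \<in> carrier (L0 M)" for k using L0_ind_carrier Am by blast
    have "\<forall>k. \<exists>a. a \<in> B \<rightarrow> carrier (L0 M) \<and> x k = (\<Oplus>\<^bsub>E\<^esub> c\<in>B. a c \<odot>\<^bsub>E\<^esub> c)"
      using E.coords[OF fin BE sp] x by blast
    then obtain a where a: "\<And>k::nat. a k \<in> B \<rightarrow> carrier (L0 M)"
      and xe: "\<And>k::nat. x k = (\<Oplus>\<^bsub>E\<^esub> c\<in>B. a k c \<odot>\<^bsub>E\<^esub> c)"
      by metis
    have "\<forall>c\<in>B. \<exists>g. g \<in> carrier (L0 M) \<and> (\<forall>k. L0_ind M (A k) \<otimes>\<^bsub>L0 M\<^esub> g = L0_ind M (A k) \<otimes>\<^bsub>L0 M\<^esub> a k c)"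
    proof
      fix c assume c: "c \<in> B"
      have "\<exists>g\<in>carrier (L0 M). \<forall>k. L0_ind M (A k) \<otimes>\<^bsub>L0 M\<^esub> g = L0_ind M (A k) \<otimes>\<^bsub>L0 M\<^esub> a k c"
        by (rule L0_glue[OF A]) (use a c in auto)
      then show "\<exists>g. g \<in> carrier (L0 M) \<and> (\<forall>k. L0_ind M (A k) \<otimes>\<^bsub>L0 M\<^esub> g = L0_ind M (A k) \<otimes>\<^bsub>L0 M\<^esub> a k c)"
        by blast
    qed
    from bchoice[OF this] obtain g where
      gall: "\<forall>c\<in>B. g c \<in> carrier (L0 M) \<and> (\<forall>k. L0_ind M (A k) \<otimes>\<^bsub>L0 M\<^esub> g c = L0_ind M (A k) \<otimes>\<^bsub>L0 M\<^esub> a k c)"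
      by (elim exE)
    have g: "g \<in> B \<rightarrow> carrier (L0 M)" using gall by (simp add: Pi_iff)
    have gk: "\<And>c k. c \<in> B \<Longrightarrow> L0_ind M (A k) \<otimes>\<^bsub>L0 M\<^esub> g c = L0_ind M (A k) \<otimes>\<^bsub>L0 M\<^esub> a k c"
      using gall by simp
    define y where "y = (\<Oplus>\<^bsub>E\<^esub> c\<in>B. g c \<odot>\<^bsub>E\<^esub> c)"
    have yc: "y \<in> carrier E" unfolding y_def using g BE by (auto intro!: E.finsum_closed)
    have yk: "L0_ind M (A k) \<odot>\<^bsub>E\<^esub> y = L0_ind M (A k) \<odot>\<^bsub>E\<^esub> x k" for k
    proof -
      have "L0_ind M (A k) \<odot>\<^bsub>E\<^esub> y = (\<Oplus>\<^bsub>E\<^esub> c\<in>B. (L0_ind M (A k) \<otimes>\<^bsub>L0 M\<^esub> g c) \<odot>\<^bsub>E\<^esub> c)"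
        unfolding y_def by (rule E.smult_finsum_coef[OF fin BE g uc])
      also have "\<dots> = (\<Oplus>\<^bsub>E\<^esub> c\<in>B. (L0_ind M (A k) \<otimes>\<^bsub>L0 M\<^esub> a k c) \<odot>\<^bsub>E\<^esub> c)"
        by (rule E.finsum_cong') (use gk a BE uc in \<open>auto intro!: E.smult_closed simp: Pi_iff subset_iff\<close>)
      also have "\<dots> = L0_ind M (A k) \<odot>\<^bsub>E\<^esub> x k"
        unfolding xe by (rule E.smult_finsum_coef[OF fin BE a uc, symmetric])
      finally show ?thesis .
    qed
    have uniq: "y1 = y2" if y1: "y1 \<in> carrier E" and y2: "y2 \<in> carrier E"
      and h: "\<And>k. L0_ind M (A k) \<odot>\<^bsub>E\<^esub> y1 = L0_ind M (A k) \<odot>\<^bsub>E\<^esub> y2" for y1 y2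
    proof -
      define z where "z = y1 \<oplus>\<^bsub>E\<^esub> \<ominus>\<^bsub>E\<^esub> y2"
      have zc: "z \<in> carrier E" using y1 y2 z_def by simp
      have zk: "L0_ind M (A k) \<odot>\<^bsub>E\<^esub> z = \<zero>\<^bsub>E\<^esub>" for k
        using h[of k] y1 y2 uc[of k]
        by (simp add: z_def E.smult_r_distr E.smult_r_minus E.r_neg)
      obtain e where e: "e \<in> B \<rightarrow> carrier (L0 M)" and ze: "z = (\<Oplus>\<^bsub>E\<^esub> c\<in>B. e c \<odot>\<^bsub>E\<^esub> c)"
        using E.coords[OF fin BE sp zc] by blast
      have e0: "e c = \<zero>\<^bsub>L0 M\<^esub>" if c: "c \<in> B" for c
      proof (rule L0_zero_local[OF A])
        show "e c \<in> carrier (L0 M)" using e c by auto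
        fix k
        have s0: "(\<Oplus>\<^bsub>E\<^esub> c\<in>B. (L0_ind M (A k) \<otimes>\<^bsub>L0 M\<^esub> e c) \<odot>\<^bsub>E\<^esub> c) = \<zero>\<^bsub>E\<^esub>"
          using zk[of k] E.smult_finsum_coef[OF fin BE e uc] ze by simp
        have P: "(\<lambda>c. L0_ind M (A k) \<otimes>\<^bsub>L0 M\<^esub> e c) \<in> B \<rightarrow> carrier (L0 M)"
          using e uc by (auto simp: Pi_iff)
        show "L0_ind M (A k) \<otimes>\<^bsub>L0 M\<^esub> e c = \<zero>\<^bsub>L0 M\<^esub>"
          using E.lin_indep_B[OF fin BE li P s0 c] by simp
      qed
      have "z = (\<Oplus>\<^bsub>E\<^esub> c\<in>B. \<zero>\<^bsub>E\<^esub>)"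
        unfolding ze by (rule E.finsum_cong') (use e0 BE in auto)
      then have "z = \<zero>\<^bsub>E\<^esub>" by simp
      have "y1 = y1 \<oplus>\<^bsub>E\<^esub> (\<ominus>\<^bsub>E\<^esub> y2 \<oplus>\<^bsub>E\<^esub> y2)" using y1 y2 by (simp add: E.l_neg)
      also have "\<dots> = z \<oplus>\<^bsub>E\<^esub> y2" using y1 y2 by (simp add: z_def E.a_assoc)
      also have "\<dots> = y2" using \<open>z = \<zero>\<^bsub>E\<^esub>\<close> y2 by simp
      finally show ?thesis .
    qed
    show "\<exists>!y. y \<in> carrier E \<and> (\<forall>k. L0_ind M (A k) \<odot>\<^bsub>E\<^esub> y = L0_ind M (A k) \<odot>\<^bsub>E\<^esub> x k)"
    proof (rule ex1I[of _ y])
      show "y \<in> carrier E \<and> (\<forall>k. L0_ind M (A k) \<odot>\<^bsub>E\<^esub> y = L0_ind M (A k) \<odot>\<^bsub>E\<^esub> x k)"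
        using yc yk by blast
      fix w assume "w \<in> carrier E \<and> (\<forall>k. L0_ind M (A k) \<odot>\<^bsub>E\<^esub> w = L0_ind M (A k) \<odot>\<^bsub>E\<^esub> x k)"
      then show "w = y" using uniq[of w y] yc yk by simp
    qed
  qed
qed

end
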